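(* Let $A_1,A_2,A_3$ be three distinct points lying on a gyrocircle with gyrocenter $O$ in the Einstein gyrovector space $\mathbb{R}^n_s$, $n\ge2$. Let $\theta=\angle A_1A_3A_2$ be the inscribed gyroangle and $2\phi=\angle A_1OA_2$ the gyrocentral gyroangle, both subtending the gyroarc $\widehat{A_1A_2}$. Let $\delta_{A_1A_2A_3}$ be the defect of gyrotriangle $A_1A_2A_3$ and $\delta_{A_1A_2O}$ the defect of gyrotriangle $A_1A_2O$. Then $$\sin\big(\theta+\tfrac12\delta_{A_1A_2A_3}\big)=\sin\big(\phi+\tfrac12\delta_{A_1A_2O}\big),$$ so that either $\theta+\tfrac12\delta_{A_1A_2A_3}=\phi+\tfrac12\delta_{A_1A_2O}$ or $\theta+\tfrac12\delta_{A_1A_2A_3}=\pi-(\phi+\tfrac12\delta_{A_1A_2O})$.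
   Context: Fix $s>0$, $n\ge2$; $\mathbb{R}^n_s=\{v\in\mathbb{R}^n:\|v\|<s\}$ with Einstein addition $u\oplus v=\frac{1}{1+u\cdot v/s^2}\{u+\frac{1}{\gamma_u}v+\frac{1}{s^2}\frac{\gamma_u}{1+\gamma_u}(u\cdot v)u\}$, $\gamma_v=(1-\|v\|^2/s^2)^{-1/2}$, $\ominus v=-v$. Gyrodistance between $A,B$: $\|\ominus A\oplus B\|$. Gyrolines/gyrosegments are intersections of Euclidean lines/segments with the ball. The gyroangle at vertex $A$ between gyrorays $AB,AC$ is $\alpha\in[0,\pi]$ with $\cos\alpha=\frac{(\ominus A\oplus B)\cdot(\ominus A\oplus C)}{\|\ominus A\oplus B\|\|\ominus A\oplus C\|}$. The defect of a gyrotriangle with gyroangles $\alpha_1,\alpha_2,\alpha_3$ is $\pi-\alpha_1-\alpha_2-\alpha_3$. The gyroplane of a gyrobarycentrically independent triple $\{A_1,A_2,A_3\}$ (i.e. $\ominus A_1\oplus A_2,\ominus A_1\oplus A_3$ linearly independent) is $(A_1\oplus\mathrm{span}\{\ominus A_1\oplus A_2,\ominus A_1\oplus A_3\})\cap\mathbb{R}^n_s$; a gyrocircle with gyrocenter $O$ and gyroradius $r$ is the set of points of a gyroplane containing $O$ at gyrodistance $r$ from $O$. *)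

theory Defs
  imports "HOL-Analysis.Analysis"
begin

definition gamma :: "real \<Rightarrow> 'a::real_inner \<Rightarrow> real" where
  "gamma s v = 1 / sqrt (1 - (norm v)\<^sup>2 / s\<^sup>2)"

definition eadd :: "real \<Rightarrow> 'a::real_inner \<Rightarrow> 'a \<Rightarrow> 'a" where
  "eadd s u v = (1 / (1 + (u \<bullet> v) / s\<^sup>2)) *\<^sub>R
      (u + (1 / gamma s u) *\<^sub>R v
         + ((1 / s\<^sup>2) * (gamma s u / (1 + gamma s u)) * (u \<bullet> v)) *\<^sub>R u)"

definition sball :: "real \<Rightarrow> 'a::real_normed_vector set" where
  "sball s = {v. norm v < s}"

definition gvec :: "real \<Rightarrow> 'a::real_inner \<Rightarrow> 'a \<Rightarrow> 'a" where
  "gvec s A B = eadd s (- A) B"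

definition gdist :: "real \<Rightarrow> 'a::real_inner \<Rightarrow> 'a \<Rightarrow> real" where
  "gdist s A B = norm (gvec s A B)"

definition gangle :: "real \<Rightarrow> 'a::real_inner \<Rightarrow> 'a \<Rightarrow> 'a \<Rightarrow> real" where
  "gangle s A B C = arccos ((gvec s A B \<bullet> gvec s A C) / (gdist s A B * gdist s A C))"

definition gdefect :: "real \<Rightarrow> 'a::real_inner \<Rightarrow> 'a \<Rightarrow> 'a \<Rightarrow> real" where
  "gdefect s A B C = pi - gangle s A B C - gangle s B A C - gangle s C A B"

definition gyro_indep :: "real \<Rightarrow> 'a::real_inner \<Rightarrow> 'a \<Rightarrow> 'a \<Rightarrow> bool" where
  "gyro_indep s A1 A2 A3 = (independent {gvec s A1 A2, gvec s A1 A3}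
      \<and> gvec s A1 A2 \<noteq> gvec s A1 A3)"

definition gyroplane :: "real \<Rightarrow> 'a::real_inner \<Rightarrow> 'a \<Rightarrow> 'a \<Rightarrow> 'a set" where
  "gyroplane s A1 A2 A3 =
     {eadd s A1 v | v. v \<in> span {gvec s A1 A2, gvec s A1 A3} \<and> v \<in> sball s} \<inter> sball s"

definition on_gyrocircle :: "real \<Rightarrow> 'a::real_inner \<Rightarrow> 'a set \<Rightarrow> bool" where
  "on_gyrocircle s C S = (\<exists>P1 P2 P3 r.
      P1 \<in> sball s \<and> P2 \<in> sball s \<and> P3 \<in> sball s \<and> gyro_indep s P1 P2 P3 \<and>
      C \<in> gyroplane s P1 P2 P3 \<and>
      S \<subseteq> {X \<in> gyroplane s P1 P2 P3. gdist s C X = r})"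

end

theory Submission
  imports Defs
begin


lemma gamma_props:
  fixes v :: "'a::real_inner"
  assumes s: "s > 0" and v: "norm v < s"
  shows "(norm v)\<^sup>2 / s\<^sup>2 < 1" "gamma s v > 0" "(gamma s v)\<^sup>2 * (1 - (norm v)\<^sup>2 / s\<^sup>2) = 1"
    "(norm v)\<^sup>2 / s\<^sup>2 = 1 - 1 / (gamma s v)\<^sup>2" "gamma s v \<ge> 1"
proof -
  have n0: "norm v \<ge> 0" by simp
  have ns: "(norm v)\<^sup>2 < s\<^sup>2" using v n0 by (simp add: power_strict_mono)
  then show lt: "(norm v)\<^sup>2 / s\<^sup>2 < 1" using s by simp
  then have pos: "1 - (norm v)\<^sup>2 / s\<^sup>2 > 0" by simp
  show "gamma s v > 0" unfolding gamma_def using pos by simp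
  have gg: "(gamma s v)\<^sup>2 = 1 / (1 - (norm v)\<^sup>2 / s\<^sup>2)" unfolding gamma_def using pos ns
    by (simp add: power_divide)
  show g2: "(gamma s v)\<^sup>2 * (1 - (norm v)\<^sup>2 / s\<^sup>2) = 1" 
  proof -
    have ne: "1 - (norm v)\<^sup>2 / s\<^sup>2 \<noteq> 0" using pos by linarith
    have "\<forall>y::real. y \<noteq> 0 \<longrightarrow> 1/y*y = 1" by simp
    then show ?thesis unfolding gg using ne by blast
  qed
  have "1 / (gamma s v)\<^sup>2 = 1 - (norm v)\<^sup>2 / s\<^sup>2" unfolding gg by simp
  then show "(norm v)\<^sup>2 / s\<^sup>2 = 1 - 1 / (gamma s v)\<^sup>2" by simp
  have "sqrt (1 - (norm v)\<^sup>2 / s\<^sup>2) \<le> 1" using pos by simp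
  moreover have "sqrt (1 - (norm v)\<^sup>2 / s\<^sup>2) > 0" using pos by simp
  ultimately show "gamma s v \<ge> 1" unfolding gamma_def by simp
qed

lemma gamma_minus: "gamma s (- v) = gamma s v" by (simp add: gamma_def)

lemma gvec_expand:
  fixes A B :: "'a::real_inner"
  shows "gvec s A B = (1 / (1 - (A \<bullet> B) / s\<^sup>2)) *\<^sub>R
     ((1 / gamma s A) *\<^sub>R B + (-1 + (gamma s A / (1 + gamma s A)) * (A \<bullet> B) / s\<^sup>2) *\<^sub>R A)"
  unfolding gvec_def eadd_def gamma_minus
  by (simp add: algebra_simps)

lemma inner_lt:
  fixes A B :: "'a::real_inner"
  assumes s: "s > 0" and "norm A < s" "norm B < s"
  shows "1 - (A \<bullet> B) / s\<^sup>2 > 0"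
proof -
  have "A \<bullet> B \<le> norm A * norm B" by (simp add: norm_cauchy_schwarz)
  also have "\<dots> < s * s" using assms by (simp add: mult_strict_mono')
  finally show ?thesis using s by (simp add: power2_eq_square)
qed

lemma scal_core:
  fixes t u x m n k :: real
  assumes "t*x + u = 1" "t\<^sup>2*x + 2*t*u = 1" "u*u = 1 - x"
  shows "(1-m)*(1-n) - (u*u*k + u*(-1+t*n)*m + (-1+t*m)*u*n + (-1+t*m)*(-1+t*n)*x) = (1-k)*(u*u)"
  using assms by algebra

lemma scal_id:
  fixes a x m n k s :: real
  assumes a: "a > 0" and ax: "a\<^sup>2 * (1 - x) = 1" and m: "1 - m \<noteq> 0" and n: "1 - n \<noteq> 0" and s: "s > 0"
  shows "1 - ((1/(1-m)) * (1/(1-n)) * ((1/a)*(1/a)*(k * s\<^sup>2) + (1/a)*(-1 + a/(1+a)*n)*(m * s\<^sup>2)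
           + (-1 + a/(1+a)*m)*(1/a)*(n * s\<^sup>2) + (-1 + a/(1+a)*m)*(-1 + a/(1+a)*n)*(x * s\<^sup>2)))/s\<^sup>2
       = (1 - k)/(a\<^sup>2*(1-m)*(1-n))"
proof -
  define t where "t = a/(1+a)"
  define u where "u = 1/a"
  have a1: "1 + a \<noteq> 0" using a by simp
  define w where "w = 1/(1+a)"
  have e1: "u*a = 1" unfolding u_def using a by simp
  have e2: "w*(1+a) = 1" unfolding w_def using a1 by simp
  have e3: "t = a*w" unfolding t_def w_def by simp
  have e4: "a*a*(1-x) = 1" using ax by (simp add: power2_eq_square)
  have h1: "t*x + u = 1" using e1 e2 e3 e4 by algebra
  have h2: "t\<^sup>2*x + 2*t*u = 1" using e1 e2 e3 e4 by algebra
  have h3: "u*u = 1 - x" using e1 e4 by algebra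
  note core = scal_core[OF h1 h2 h3, of m n k]
  have e: "(1/a)*(1/a)*(k * s\<^sup>2) + (1/a)*(-1 + a/(1+a)*n)*(m * s\<^sup>2)
           + (-1 + a/(1+a)*m)*(1/a)*(n * s\<^sup>2) + (-1 + a/(1+a)*m)*(-1 + a/(1+a)*n)*(x * s\<^sup>2)
        = s\<^sup>2 * (u*u*k + u*(-1+t*n)*m + (-1+t*m)*u*n + (-1+t*m)*(-1+t*n)*x)"
    unfolding t_def u_def by (simp add: algebra_simps)
  have P: "(u*u*k + u*(-1+t*n)*m + (-1+t*m)*u*n + (-1+t*m)*(-1+t*n)*x) = (1-m)*(1-n) - (1-k)*(u*u)"
    using core by linarith
  define q1 where "q1 = 1/(1-m)"
  define q2 where "q2 = 1/(1-n)"
  define r where "r = 1/s\<^sup>2"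
  have f1: "q1*(1-m) = 1" unfolding q1_def using m by simp
  have f2: "q2*(1-n) = 1" unfolding q2_def using n by simp
  have f3: "r * s\<^sup>2 = 1" unfolding r_def using s by simp
  have L: "1 - q1*q2*(s\<^sup>2 * ((1-m)*(1-n) - (1-k)*(u*u)))*r = (1-k)*(u*u)*q1*q2"
    using f1 f2 f3 by algebra
  have R: "(1 - k)/(a\<^sup>2*(1-m)*(1-n)) = (1-k)*(u*u)*q1*q2"
    unfolding u_def q1_def q2_def by (simp add: power2_eq_square)
  show ?thesis unfolding e P R using L unfolding q1_def q2_def r_def by (simp add: divide_inverse)
qed

lemma inner_gen:
  fixes A B C :: "'a::real_inner"
  shows "(p *\<^sub>R (u *\<^sub>R B + b *\<^sub>R A)) \<bullet> (q *\<^sub>R (u *\<^sub>R C + c *\<^sub>R A))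
     = p*q*(u*u*(B \<bullet> C) + u*c*(B \<bullet> A) + b*u*(A \<bullet> C) + b*c*(A \<bullet> A))"
  by (simp add: inner_add_left inner_add_right algebra_simps)

lemma L1:
  fixes A B C :: "'a::real_inner"
  assumes s: "s > 0" and A: "norm A < s" and B: "norm B < s" and C: "norm C < s"
  shows "1 - (gvec s A B \<bullet> gvec s A C)/s\<^sup>2 = (1 - (B \<bullet> C)/s\<^sup>2)/((gamma s A)\<^sup>2 * (1 - (A \<bullet> B)/s\<^sup>2) * (1 - (A \<bullet> C)/s\<^sup>2))"
proof -
  define a where "a = gamma s A"
  define x where "x = (norm A)\<^sup>2/s\<^sup>2"
  define m where "m = (A \<bullet> B)/s\<^sup>2"
  define n where "n = (A \<bullet> C)/s\<^sup>2"
  define k where "k = (B \<bullet> C)/s\<^sup>2"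
  have a0: "a > 0" unfolding a_def using gamma_props[OF s A] by simp
  have ax: "a\<^sup>2 * (1 - x) = 1" unfolding a_def x_def using gamma_props[OF s A] by simp
  have m1: "1 - m \<noteq> 0" unfolding m_def using inner_lt[OF s A B] by linarith
  have n1: "1 - n \<noteq> 0" unfolding n_def using inner_lt[OF s A C] by linarith
  have s2: "s\<^sup>2 \<noteq> 0" using s by simp
  have AB: "A \<bullet> B = m * s\<^sup>2" unfolding m_def using s2 by simp
  have AC: "A \<bullet> C = n * s\<^sup>2" unfolding n_def using s2 by simp
  have BC: "B \<bullet> C = k * s\<^sup>2" unfolding k_def using s2 by simp
  have AA: "A \<bullet> A = x * s\<^sup>2" unfolding x_def using s2 by (simp add: power2_norm_eq_inner)
  have G1: "gvec s A B = (1/(1-m)) *\<^sub>R ((1/a) *\<^sub>R B + (-1 + a/(1+a)*m) *\<^sub>R A)"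
    unfolding gvec_expand m_def a_def by simp
  have G2: "gvec s A C = (1/(1-n)) *\<^sub>R ((1/a) *\<^sub>R C + (-1 + a/(1+a)*n) *\<^sub>R A)"
    unfolding gvec_expand n_def a_def by simp
  have "gvec s A B \<bullet> gvec s A C = (1/(1-m)) * (1/(1-n)) * ((1/a)*(1/a)*(k * s\<^sup>2) + (1/a)*(-1 + a/(1+a)*n)*(m * s\<^sup>2)
           + (-1 + a/(1+a)*m)*(1/a)*(n * s\<^sup>2) + (-1 + a/(1+a)*m)*(-1 + a/(1+a)*n)*(x * s\<^sup>2))"
    unfolding G1 G2 inner_gen inner_commute[of B A] AB AC BC AA ..
  then have "1 - (gvec s A B \<bullet> gvec s A C)/s\<^sup>2 = (1 - k)/(a\<^sup>2*(1-m)*(1-n))"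
    using scal_id[OF a0 ax m1 n1 s] by simp
  then show ?thesis unfolding a_def k_def m_def n_def .
qed

definition gg :: "real \<Rightarrow> 'a::real_inner \<Rightarrow> 'a \<Rightarrow> real" where
  "gg s X Y = gamma s X * gamma s Y * (1 - (X \<bullet> Y)/s\<^sup>2)"

lemma gg_sym: "gg s X Y = gg s Y X"
  unfolding gg_def by (simp add: inner_commute)

lemma gg_pos:
  fixes A B :: "'a::real_inner"
  assumes s: "s > 0" and A: "norm A < s" and B: "norm B < s"
  shows "gg s A B > 0"
  unfolding gg_def using gamma_props(2)[OF s A] gamma_props(2)[OF s B] inner_lt[OF s A B] by simp

lemma gg_self:
  fixes A :: "'a::real_inner"
  assumes s: "s > 0" and A: "norm A < s"
  shows "gg s A A = 1"
  unfolding gg_def using gamma_props(3)[OF s A] by (simp add: dot_square_norm power2_eq_square)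

lemma L2:
  fixes A B C :: "'a::real_inner"
  assumes s: "s > 0" and A: "norm A < s" and B: "norm B < s" and C: "norm C < s"
  shows "1 - (gvec s A B \<bullet> gvec s A C)/s\<^sup>2 = gg s B C / (gg s A B * gg s A C)"
proof -
  have b: "gamma s B > 0" and c: "gamma s C > 0" using gamma_props(2) s B C by auto
  have bc: "gamma s B * gamma s C \<noteq> 0" using b c by simp
  have "gg s B C / (gg s A B * gg s A C) = ((gamma s B * gamma s C) * (1 - (B \<bullet> C)/s\<^sup>2)) /
     ((gamma s B * gamma s C) * ((gamma s A)\<^sup>2 * (1 - (A \<bullet> B)/s\<^sup>2) * (1 - (A \<bullet> C)/s\<^sup>2)))"
    unfolding gg_def by (simp add: mult_ac power2_eq_square)
  also have "\<dots> = (1 - (B \<bullet> C)/s\<^sup>2) / ((gamma s A)\<^sup>2 * (1 - (A \<bullet> B)/s\<^sup>2) * (1 - (A \<bullet> C)/s\<^sup>2))"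
    using bc by (rule mult_divide_mult_cancel_left)
  finally show ?thesis unfolding L1[OF s A B C] by simp
qed

lemma norm_gvec:
  fixes A B :: "'a::real_inner"
  assumes s: "s > 0" and A: "norm A < s" and B: "norm B < s"
  shows "(norm (gvec s A B))\<^sup>2 / s\<^sup>2 = 1 - 1/(gg s A B)\<^sup>2"
proof -
  have "1 - (gvec s A B \<bullet> gvec s A B)/s\<^sup>2 = 1/(gg s A B)\<^sup>2"
    unfolding L2[OF s A B B] gg_self[OF s B] by (simp add: power2_eq_square)
  then show ?thesis by (simp add: power2_norm_eq_inner)
qed

lemma gg_ge1:
  fixes A B :: "'a::real_inner"
  assumes s: "s > 0" and A: "norm A < s" and B: "norm B < s"
  shows "gg s A B \<ge> 1"
proof -
  have p: "gg s A B > 0" using gg_pos[OF s A B] .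
  have "(norm (gvec s A B))\<^sup>2 / s\<^sup>2 \<ge> 0" by simp
  then have "1/(gg s A B)\<^sup>2 \<le> 1" using norm_gvec[OF s A B] by linarith
  then have q: "1 \<le> (gg s A B)\<^sup>2" using p by (simp add: divide_le_eq_1)
  have "(1::real)\<^sup>2 \<le> (gg s A B)\<^sup>2" using q by simp
  then show ?thesis by (rule power2_le_imp_le[OF _ less_imp_le[OF p]])
qed

lemma real_eq_aux:
  fixes s P Q I :: real
  assumes s: "s > 0" and P: "0 \<le> P" "P < s" and Q: "0 \<le> Q" "Q < s" and I: "I \<le> P*Q"
    and e: "(s\<^sup>2 - I)\<^sup>2 = (s\<^sup>2 - P\<^sup>2)*(s\<^sup>2 - Q\<^sup>2)"
  shows "P\<^sup>2 + Q\<^sup>2 - 2*I = 0"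
proof -
  have PQ: "P*Q < s * s" using P Q by (simp add: mult_strict_mono')
  have h0: "0 < s\<^sup>2 - P*Q" using PQ by (simp add: power2_eq_square)
  have h1: "s\<^sup>2 - P*Q \<le> s\<^sup>2 - I" using I by simp
  have "(s\<^sup>2 - P*Q)\<^sup>2 \<le> (s\<^sup>2 - I)\<^sup>2" using h0 h1 by (simp add: power_mono)
  moreover have "(s\<^sup>2 - P*Q)\<^sup>2 = (s\<^sup>2 - P\<^sup>2)*(s\<^sup>2 - Q\<^sup>2) + s\<^sup>2*(P-Q)\<^sup>2"
    by (simp add: power2_eq_square algebra_simps)
  ultimately have "s\<^sup>2*(P-Q)\<^sup>2 \<le> 0" using e by linarith
  then have "(P-Q)\<^sup>2 \<le> 0" using s by (simp add: mult_le_0_iff)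
  then have PQe: "P = Q" by simp
  have "(s\<^sup>2 - P*Q)\<^sup>2 = (s\<^sup>2 - I)\<^sup>2" using e PQe by (simp add: power2_eq_square)
  then have "s\<^sup>2 - P*Q = s\<^sup>2 - I" using h0 h1 by (simp add: power2_eq_iff)
  then show ?thesis using PQe by (simp add: power2_eq_square)
qed

lemma gg_eq1:
  fixes A B :: "'a::real_inner"
  assumes s: "s > 0" and A: "norm A < s" and B: "norm B < s" and g: "gg s A B = 1"
  shows "A = B"
proof -
  have a: "(gamma s A)\<^sup>2 * (1 - (norm A)\<^sup>2 / s\<^sup>2) = 1" by (rule gamma_props(3)[OF s A])
  have b: "(gamma s B)\<^sup>2 * (1 - (norm B)\<^sup>2 / s\<^sup>2) = 1" by (rule gamma_props(3)[OF s B])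
  have "(gg s A B)\<^sup>2 = 1" using g by simp
  then have g2: "(gamma s A)\<^sup>2 * (gamma s B)\<^sup>2 * (1 - (A \<bullet> B)/s\<^sup>2)\<^sup>2 = 1"
    unfolding gg_def by (simp add: power_mult_distrib)
  have "(1 - (A \<bullet> B)/s\<^sup>2)\<^sup>2 = (1 - (norm A)\<^sup>2 / s\<^sup>2) * (1 - (norm B)\<^sup>2 / s\<^sup>2)"
  proof -
    have "(1 - (A \<bullet> B)/s\<^sup>2)\<^sup>2 = ((gamma s A)\<^sup>2 * (1 - (norm A)\<^sup>2 / s\<^sup>2)) * ((gamma s B)\<^sup>2 * (1 - (norm B)\<^sup>2 / s\<^sup>2)) * (1 - (A \<bullet> B)/s\<^sup>2)\<^sup>2"
      unfolding a b by simp
    also have "\<dots> = ((gamma s A)\<^sup>2 * (gamma s B)\<^sup>2 * (1 - (A \<bullet> B)/s\<^sup>2)\<^sup>2) * ((1 - (norm A)\<^sup>2 / s\<^sup>2) * (1 - (norm B)\<^sup>2 / s\<^sup>2))"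
      by (simp add: mult_ac)
    finally show ?thesis unfolding g2 by simp
  qed
  then have e: "(s\<^sup>2 - A \<bullet> B)\<^sup>2 = (s\<^sup>2 - (norm A)\<^sup>2)*(s\<^sup>2 - (norm B)\<^sup>2)"
    using s by (simp add: field_simps power2_eq_square)
  have "(norm A)\<^sup>2 + (norm B)\<^sup>2 - 2*(A \<bullet> B) = 0"
    by (rule real_eq_aux[OF s _ A _ B _ e]) (auto simp: norm_cauchy_schwarz)
  then have "(norm (A - B))\<^sup>2 = 0"
    by (simp add: power2_norm_eq_inner inner_diff_left inner_diff_right inner_commute)
  then show ?thesis by simp
qed

lemma norm_gvec2:
  fixes A B :: "'a::real_inner"
  assumes s: "s > 0" and A: "norm A < s" and B: "norm B < s"
  shows "norm (gvec s A B) = s * sqrt ((gg s A B)\<^sup>2 - 1) / gg s A B"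
proof -
  have p: "gg s A B > 0" using gg_pos[OF s A B] .
  have "(norm (gvec s A B))\<^sup>2 = s\<^sup>2 * ((gg s A B)\<^sup>2 - 1) / (gg s A B)\<^sup>2"
    using norm_gvec[OF s A B] s p by (simp add: field_simps)
  then have "norm (gvec s A B) = sqrt (s\<^sup>2 * ((gg s A B)\<^sup>2 - 1) / (gg s A B)\<^sup>2)"
    by (metis norm_ge_zero real_sqrt_unique)
  also have "\<dots> = s * sqrt ((gg s A B)\<^sup>2 - 1) / gg s A B"
    using s p by (simp add: real_sqrt_mult real_sqrt_divide)
  finally show ?thesis .
qed

lemma gdist_eq: 
  fixes A B :: "'a::real_inner"
  assumes s: "s > 0" and A: "norm A < s" and B: "norm B < s"
  shows "gdist s A B = s * sqrt ((gg s A B)\<^sup>2 - 1) / gg s A B"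
  unfolding gdist_def by (rule norm_gvec2[OF s A B])

lemma cos_formula:
  fixes A B C :: "'a::real_inner"
  assumes s: "s > 0" and A: "norm A < s" and B: "norm B < s" and C: "norm C < s"
  shows "(gvec s A B \<bullet> gvec s A C)/(gdist s A B * gdist s A C)
    = (gg s A B * gg s A C - gg s B C)/(sqrt ((gg s A B)\<^sup>2 - 1) * sqrt ((gg s A C)\<^sup>2 - 1))"
proof -
  define p where "p = gg s A B"
  define q where "q = gg s A C"
  define r where "r = gg s B C"
  have p0: "p > 0" unfolding p_def using gg_pos[OF s A B] .
  have q0: "q > 0" unfolding q_def using gg_pos[OF s A C] .
  have uv: "gvec s A B \<bullet> gvec s A C = s\<^sup>2 * (p*q - r)/(p*q)"
  proof -
    have "1 - (gvec s A B \<bullet> gvec s A C)/s\<^sup>2 = r/(p*q)" unfolding p_def q_def r_def by (rule L2[OF s A B C])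
    then show ?thesis using s p0 q0 by (simp add: field_simps)
  qed
  show ?thesis
  proof (cases "sqrt (p\<^sup>2 - 1) * sqrt (q\<^sup>2 - 1) = 0")
    case True
    then show ?thesis unfolding gdist_eq[OF s A B] gdist_eq[OF s A C] p_def[symmetric] q_def[symmetric] r_def[symmetric]
      by auto
  next
    case False
    then have a: "sqrt (p\<^sup>2 - 1) \<noteq> 0" and b: "sqrt (q\<^sup>2 - 1) \<noteq> 0" by auto
    show ?thesis unfolding gdist_eq[OF s A B] gdist_eq[OF s A C] p_def[symmetric] q_def[symmetric] r_def[symmetric] uv
      using a b s p0 q0 by (simp add: field_simps power2_eq_square)
  qed
qed

lemma span2_rep:
  fixes e1 e2 v :: "'a::real_vector"
  assumes "v \<in> span {e1, e2}"
  shows "\<exists>b c. v = b *\<^sub>R e1 + c *\<^sub>R e2"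
proof -
  obtain b where "v - b *\<^sub>R e1 \<in> span {e2}" using assms span_breakdown_eq by blast
  then obtain c where "v - b *\<^sub>R e1 = c *\<^sub>R e2" using span_singleton by blast
  then have "v = b *\<^sub>R e1 + c *\<^sub>R e2" by (simp add: algebra_simps)
  then show ?thesis by blast
qed

lemma gyroplane_rep:
  fixes P1 P2 P3 X :: "'a::real_inner"
  assumes s: "s > 0" and P: "norm P1 < s" and X: "X \<in> gyroplane s P1 P2 P3"
  defines "W \<equiv> \<lambda>e. (1 / gamma s P1) *\<^sub>R e + ((1/s\<^sup>2) * (gamma s P1 / (1 + gamma s P1)) * (P1 \<bullet> e)) *\<^sub>R P1"
    and "h \<equiv> \<lambda>e. (P1 \<bullet> e) / s\<^sup>2"
  shows "\<exists>b c. 1 + b * h (gvec s P1 P2) + c * h (gvec s P1 P3) > 0 \<and>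
     (1 + b * h (gvec s P1 P2) + c * h (gvec s P1 P3)) *\<^sub>R X = P1 + b *\<^sub>R W (gvec s P1 P2) + c *\<^sub>R W (gvec s P1 P3)"
proof -
  obtain v where v: "v \<in> span {gvec s P1 P2, gvec s P1 P3}" "v \<in> sball s" and Xv: "X = eadd s P1 v"
    using X unfolding gyroplane_def by blast
  obtain b c where bc: "v = b *\<^sub>R gvec s P1 P2 + c *\<^sub>R gvec s P1 P3" using span2_rep[OF v(1)] by blast
  have nv: "norm (- v) < s" using v(2) by (simp add: sball_def)
  have tpos: "1 + (P1 \<bullet> v)/s\<^sup>2 > 0" using inner_lt[OF s P nv] by simp
  have th: "1 + (P1 \<bullet> v)/s\<^sup>2 = 1 + b * h (gvec s P1 P2) + c * h (gvec s P1 P3)"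
    unfolding bc h_def by (simp add: inner_add_right add_divide_distrib)
  have "(1 + (P1 \<bullet> v)/s\<^sup>2) *\<^sub>R X = P1 + (1 / gamma s P1) *\<^sub>R v + ((1/s\<^sup>2) * (gamma s P1 / (1 + gamma s P1)) * (P1 \<bullet> v)) *\<^sub>R P1"
    unfolding Xv eadd_def using tpos by simp
  also have "\<dots> = P1 + b *\<^sub>R W (gvec s P1 P2) + c *\<^sub>R W (gvec s P1 P3)"
    unfolding bc W_def by (simp add: inner_add_right scaleR_add_right scaleR_add_left algebra_simps add_divide_distrib)
  finally show ?thesis using tpos th by metis
qed

lemma four_dep:
  fixes b c :: "nat \<Rightarrow> real"
  assumes inj: "inj_on (\<lambda>i. (1::real, b i, c i)) {..<4}"
  shows "\<exists>u. (\<exists>i<4. u i \<noteq> 0) \<and> (\<Sum>i<4. u i) = 0 \<and> (\<Sum>i<4. u i * b i) = 0 \<and> (\<Sum>i<4. u i * c i) = 0"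
proof -
  define w where "w = (\<lambda>i. (1::real, b i, c i))"
  define S where "S = w ` {..<4}"
  have fin: "finite S" unfolding S_def by simp
  have card: "card S = 4" unfolding S_def w_def using inj by (simp add: card_image)
  have "DIM(real \<times> real \<times> real) = 3" by simp
  then have "dependent S" using card by (intro dependent_biggerset) simp
  then obtain u' where u': "\<exists>v\<in>S. u' v \<noteq> 0" "(\<Sum>v\<in>S. u' v *\<^sub>R v) = 0"
    using dependent_finite[OF fin] by auto
  define u where "u = (\<lambda>i. u' (w i))"
  have "(\<Sum>i<4. u i *\<^sub>R w i) = 0"
    using u'(2) unfolding S_def u_def using sum.reindex[OF inj[folded w_def], of "\<lambda>v. u' v *\<^sub>R v"] by simp
  then have z: "(\<Sum>i<4. u i *\<^sub>R (1::real, b i, c i)) = 0" unfolding w_def .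
  have "fst (\<Sum>i<4. u i *\<^sub>R (1::real, b i, c i)) = (\<Sum>i<4. u i)" by (simp add: fst_sum)
  moreover have "fst (snd (\<Sum>i<4. u i *\<^sub>R (1::real, b i, c i))) = (\<Sum>i<4. u i * b i)" by (simp add: snd_sum fst_sum)
  moreover have "snd (snd (\<Sum>i<4. u i *\<^sub>R (1::real, b i, c i))) = (\<Sum>i<4. u i * c i)" by (simp add: snd_sum)
  ultimately have "(\<Sum>i<4. u i) = 0" "(\<Sum>i<4. u i * b i) = 0" "(\<Sum>i<4. u i * c i) = 0" using z by auto
  moreover have "\<exists>i<4. u i \<noteq> 0" using u'(1) unfolding S_def u_def by auto
  ultimately show ?thesis by blast
qed

lemma coplanar_rel:
  fixes X :: "nat \<Rightarrow> 'a::real_inner"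
  assumes s: "s > 0" and P: "norm P1 < s" and inpl: "\<forall>i<4. X i \<in> gyroplane s P1 P2 P3"
    and nX: "\<forall>i<4. norm (X i) < s" and inj: "inj_on X {..<4}"
  shows "\<exists>l. (\<exists>i<4. l i \<noteq> 0) \<and> (\<forall>Y. (\<Sum>i<4. l i * gg s (X i) Y) = 0)"
proof -
  define W where "W = (\<lambda>e. (1 / gamma s P1) *\<^sub>R e + ((1/s\<^sup>2) * (gamma s P1 / (1 + gamma s P1)) * (P1 \<bullet> e)) *\<^sub>R P1)"
  define h where "h = (\<lambda>e. (P1 \<bullet> e) / s\<^sup>2)"
  define W1 where "W1 = W (gvec s P1 P2)"
  define W2 where "W2 = W (gvec s P1 P3)"
  define h1 where "h1 = h (gvec s P1 P2)"
  define h2 where "h2 = h (gvec s P1 P3)"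
  have "\<forall>i. \<exists>bc. i < 4 \<longrightarrow> (1 + fst bc * h1 + snd bc * h2 > 0 \<and>
     (1 + fst bc * h1 + snd bc * h2) *\<^sub>R X i = P1 + fst bc *\<^sub>R W1 + snd bc *\<^sub>R W2)"
  proof
    fix i
    show "\<exists>bc. i < 4 \<longrightarrow> (1 + fst bc * h1 + snd bc * h2 > 0 \<and>
     (1 + fst bc * h1 + snd bc * h2) *\<^sub>R X i = P1 + fst bc *\<^sub>R W1 + snd bc *\<^sub>R W2)"
    proof (cases "i < 4")
      case True
      then obtain b c where "1 + b * h1 + c * h2 > 0 \<and>
        (1 + b * h1 + c * h2) *\<^sub>R X i = P1 + b *\<^sub>R W1 + c *\<^sub>R W2"
        using gyroplane_rep[OF s P, of "X i" P2 P3] inpl unfolding W1_def W2_def h1_def h2_def W_def h_def by blast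
      then show ?thesis by (intro exI[of _ "(b,c)"]) simp
    qed simp
  qed
  then obtain bc where bc: "\<And>i. i < 4 \<Longrightarrow> 1 + fst (bc i) * h1 + snd (bc i) * h2 > 0 \<and>
     (1 + fst (bc i) * h1 + snd (bc i) * h2) *\<^sub>R X i = P1 + fst (bc i) *\<^sub>R W1 + snd (bc i) *\<^sub>R W2"
    by metis
  define b where "b = (\<lambda>i. fst (bc i))"
  define c where "c = (\<lambda>i. snd (bc i))"
  define t where "t = (\<lambda>i. 1 + b i * h1 + c i * h2)"
  have tpos: "\<And>i. i < 4 \<Longrightarrow> t i > 0" using bc unfolding t_def b_def c_def by blast
  have tX: "\<And>i. i < 4 \<Longrightarrow> t i *\<^sub>R X i = P1 + b i *\<^sub>R W1 + c i *\<^sub>R W2" using bc unfolding t_def b_def c_def by blast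
  have inj2: "inj_on (\<lambda>i. (1::real, b i, c i)) {..<4}"
  proof (rule inj_onI)
    fix i j assume i: "i \<in> {..<4}" and j: "j \<in> {..<4}" and e: "(1::real, b i, c i) = (1, b j, c j)"
    then have "b i = b j" "c i = c j" by auto
    then have "t i = t j" "t i *\<^sub>R X i = t j *\<^sub>R X j" using tX[of i] tX[of j] i j unfolding t_def by auto
    then have "X i = X j" using tpos[of i] i by simp
    then show "i = j" using inj i j by (meson inj_onD)
  qed
  obtain u where u: "\<exists>i<4. u i \<noteq> 0" "(\<Sum>i<4. u i) = 0" "(\<Sum>i<4. u i * b i) = 0" "(\<Sum>i<4. u i * c i) = 0"
    using four_dep[OF inj2] by blast
  define nu where "nu = (\<lambda>i. u i * t i)"
  have s1: "(\<Sum>i<4. nu i) = 0"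
  proof -
    have "(\<Sum>i<4. nu i) = (\<Sum>i<4. u i) + h1 * (\<Sum>i<4. u i * b i) + h2 * (\<Sum>i<4. u i * c i)"
      unfolding nu_def t_def by (simp add: sum.distrib sum_distrib_left algebra_simps)
    then show ?thesis using u by simp
  qed
  have s2: "(\<Sum>i<4. nu i *\<^sub>R X i) = 0"
  proof -
    have "(\<Sum>i<4. nu i *\<^sub>R X i) = (\<Sum>i<4. u i *\<^sub>R (t i *\<^sub>R X i))"
      unfolding nu_def by simp
    also have "\<dots> = (\<Sum>i<4. u i *\<^sub>R (P1 + b i *\<^sub>R W1 + c i *\<^sub>R W2))"
      by (rule sum.cong) (auto simp: tX)
    also have "\<dots> = (\<Sum>i<4. u i) *\<^sub>R P1 + (\<Sum>i<4. u i * b i) *\<^sub>R W1 + (\<Sum>i<4. u i * c i) *\<^sub>R W2"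
      by (simp add: scaleR_add_right sum.distrib scaleR_sum_left)
    finally show ?thesis using u by simp
  qed
  define l where "l = (\<lambda>i. nu i / gamma s (X i))"
  have gpos: "\<And>i. i < 4 \<Longrightarrow> gamma s (X i) > 0" using gamma_props(2)[OF s] nX by blast
  have "\<exists>i<4. l i \<noteq> 0" using u(1) tpos gpos unfolding l_def nu_def by fastforce
  moreover have "\<forall>Y. (\<Sum>i<4. l i * gg s (X i) Y) = 0"
  proof
    fix Y
    have "(\<Sum>i<4. l i * gg s (X i) Y) = (\<Sum>i<4. gamma s Y * (nu i - (nu i *\<^sub>R X i) \<bullet> Y / s\<^sup>2))"
    proof (rule sum.cong)
      fix i assume "i \<in> {..<4::nat}"
      then have g: "gamma s (X i) \<noteq> 0" using gpos by fastforce
      show "l i * gg s (X i) Y = gamma s Y * (nu i - (nu i *\<^sub>R X i) \<bullet> Y / s\<^sup>2)"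
        unfolding l_def gg_def using g by (simp add: algebra_simps)
    qed simp
    also have "\<dots> = gamma s Y * ((\<Sum>i<4. nu i) - (\<Sum>i<4. nu i *\<^sub>R X i) \<bullet> Y / s\<^sup>2)"
      by (simp add: sum_distrib_left sum_subtractf inner_sum_left sum_divide_distrib algebra_simps)
    finally show "(\<Sum>i<4. l i * gg s (X i) Y) = 0" using s1 s2 by simp
  qed
  ultimately show ?thesis by blast
qed



definition DG :: "real \<Rightarrow> real \<Rightarrow> real \<Rightarrow> real \<Rightarrow> real" where
  "DG c a b d = (1)*((1)*((1)*(1) - (d)*(d)) - (a)*((a)*(1) - (d)*(b)) + (b)*((a)*(d) - (1)*(b))) - (c)*((c)*((1)*(1) - (d)*(d)) - (a)*((c)*(1) - (d)*(c)) + (b)*((c)*(d) - (1)*(c))) + (c)*((c)*((a)*(1) - (d)*(b)) - (1)*((c)*(1) - (d)*(c)) + (b)*((c)*(b) - (a)*(c))) - (c)*((c)*((a)*(d) - (1)*(b)) - (1)*((c)*(d) - (1)*(c)) + (a)*((c)*(b) - (a)*(c)))"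

lemma det_zero:
  fixes l0 l1 l2 l3 a b c d :: real
  assumes e0: "l0 + l1*c + l2*c + l3*c = 0"
    and e1: "l0*c + l1 + l2*a + l3*b = 0"
    and e2: "l0*c + l1*a + l2 + l3*d = 0"
    and e3: "l0*c + l1*b + l2*d + l3 = 0"
    and nz: "l0 \<noteq> 0 \<or> l1 \<noteq> 0 \<or> l2 \<noteq> 0 \<or> l3 \<noteq> 0"
  shows "DG c a b d = 0"
proof -
  have "DG c a b d * l0 = 0" unfolding DG_def using e0 e1 e2 e3 by algebra
  moreover have "DG c a b d * l1 = 0" unfolding DG_def using e0 e1 e2 e3 by algebra
  moreover have "DG c a b d * l2 = 0" unfolding DG_def using e0 e1 e2 e3 by algebra
  moreover have "DG c a b d * l3 = 0" unfolding DG_def using e0 e1 e2 e3 by algebra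
  ultimately show ?thesis using nz by auto
qed

lemma poly_id:
  fixes a b c d :: real
  shows "((a\<^sup>2-1)*(b\<^sup>2-1)*(d\<^sup>2-1) + (a*b-d)*(a*d-b)*(b*d-a)
      + (1 - a\<^sup>2 - b\<^sup>2 - d\<^sup>2 + 2*a*b*d)*((a*b-d)+(a*d-b)-(b*d-a)))*(a+1)*(c\<^sup>2-1)
      - 2*c\<^sup>2*(a-1)*((a\<^sup>2-1)*(b\<^sup>2-1)*(d\<^sup>2-1))
    = -(a\<^sup>2-1)*(b+1)*(d+1) * DG c a b d"
  unfolding DG_def by algebra

lemma frac_aux:
  fixes Q M E F :: real
  assumes "Q \<noteq> 0" "E \<noteq> 0" "(Q + M)*E - 2*F*Q = 0"
  shows "(1 + M/Q)/2 = F/E"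
proof -
  have "(Q + M)*E = 2*F*Q" using assms(3) by simp
  then show ?thesis using assms(1,2) by (simp add: field_simps)
qed

lemma final_trig:
  fixes a b c d :: real
  assumes a1: "a > 1" and b1: "b > 1" and c1: "c > 1" and d1: "d > 1" and DG0: "DG c a b d = 0"
    and B1: "\<bar>(a*b - d)/(sqrt (a\<^sup>2-1) * sqrt (b\<^sup>2-1))\<bar> \<le> 1"
    and B2: "\<bar>(a*d - b)/(sqrt (a\<^sup>2-1) * sqrt (d\<^sup>2-1))\<bar> \<le> 1"
    and B3: "\<bar>(b*d - a)/(sqrt (b\<^sup>2-1) * sqrt (d\<^sup>2-1))\<bar> \<le> 1"
    and B4: "\<bar>(a*c - c)/(sqrt (a\<^sup>2-1) * sqrt (c\<^sup>2-1))\<bar> \<le> 1"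
  defines "\<alpha>1 \<equiv> arccos ((a*b - d)/(sqrt (a\<^sup>2-1) * sqrt (b\<^sup>2-1)))"
    and "\<alpha>2 \<equiv> arccos ((a*d - b)/(sqrt (a\<^sup>2-1) * sqrt (d\<^sup>2-1)))"
    and "\<theta> \<equiv> arccos ((b*d - a)/(sqrt (b\<^sup>2-1) * sqrt (d\<^sup>2-1)))"
    and "\<beta> \<equiv> arccos ((a*c - c)/(sqrt (a\<^sup>2-1) * sqrt (c\<^sup>2-1)))"
  shows "sin (\<theta> + (pi - \<alpha>1 - \<alpha>2 - \<theta>)/2) = sin (\<omega>/2 + (pi - \<beta> - \<beta> - \<omega>)/2)
    \<and> (\<theta> + (pi - \<alpha>1 - \<alpha>2 - \<theta>)/2 = \<omega>/2 + (pi - \<beta> - \<beta> - \<omega>)/2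
       \<or> \<theta> + (pi - \<alpha>1 - \<alpha>2 - \<theta>)/2 = pi - (\<omega>/2 + (pi - \<beta> - \<beta> - \<omega>)/2))"
proof -
  define Sa where "Sa = sqrt (a\<^sup>2-1)"
  define Sb where "Sb = sqrt (b\<^sup>2-1)"
  define Sd where "Sd = sqrt (d\<^sup>2-1)"
  define Sc where "Sc = sqrt (c\<^sup>2-1)"
  define D where "D = 1 - a\<^sup>2 - b\<^sup>2 - d\<^sup>2 + 2*a*b*d"
  define C1 where "C1 = (a*b - d)/(Sa*Sb)"
  define C2 where "C2 = (a*d - b)/(Sa*Sd)"
  define C3 where "C3 = (b*d - a)/(Sb*Sd)"
  define X where "X = (a*c - c)/(Sa*Sc)"
  have a2: "a\<^sup>2 - 1 > 0" using one_less_power[OF a1, of 2] by simp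
  have b2: "b\<^sup>2 - 1 > 0" using one_less_power[OF b1, of 2] by simp
  have c2: "c\<^sup>2 - 1 > 0" using one_less_power[OF c1, of 2] by simp
  have d2: "d\<^sup>2 - 1 > 0" using one_less_power[OF d1, of 2] by simp
  have Sa0: "Sa > 0" and Sb0: "Sb > 0" and Sc0: "Sc > 0" and Sd0: "Sd > 0"
    unfolding Sa_def Sb_def Sc_def Sd_def using a2 b2 c2 d2 by auto
  have Sa2: "Sa\<^sup>2 = a\<^sup>2 - 1" unfolding Sa_def using a2 by simp
  have Sb2: "Sb\<^sup>2 = b\<^sup>2 - 1" unfolding Sb_def using b2 by simp
  have Sc2: "Sc\<^sup>2 = c\<^sup>2 - 1" unfolding Sc_def using c2 by simp
  have Sd2: "Sd\<^sup>2 = d\<^sup>2 - 1" unfolding Sd_def using d2 by simp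
  have C1b: "-1 \<le> C1" "C1 \<le> 1" using abs_le_D1[OF B1] abs_le_D2[OF B1] unfolding C1_def Sa_def Sb_def by auto
  have C2b: "-1 \<le> C2" "C2 \<le> 1" using abs_le_D1[OF B2] abs_le_D2[OF B2] unfolding C2_def Sa_def Sd_def by auto
  have C3b: "-1 \<le> C3" "C3 \<le> 1" using abs_le_D1[OF B3] abs_le_D2[OF B3] unfolding C3_def Sb_def Sd_def by auto
  have Xb: "-1 \<le> X" "X \<le> 1" using abs_le_D1[OF B4] abs_le_D2[OF B4] unfolding X_def Sa_def Sc_def by auto
  have DA: "D = (Sa*Sb)\<^sup>2 - (a*b-d)\<^sup>2" unfolding D_def using Sa2 Sb2 by algebra
  have D0: "D \<ge> 0"
  proof -
    have "\<bar>C1\<bar> \<le> 1" using C1b by (simp add: abs_le_iff)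
    then have "C1\<^sup>2 \<le> 1" by (simp add: abs_square_le_1)
    then have "(a*b-d)\<^sup>2 \<le> (Sa*Sb)\<^sup>2" unfolding C1_def using Sa0 Sb0 by (simp add: power_divide field_simps)
    then show ?thesis unfolding DA by simp
  qed
  define R where "R = sqrt D"
  have R2: "R\<^sup>2 = D" unfolding R_def using D0 by simp
  have sinA1: "sin \<alpha>1 = R/(Sa*Sb)"
  proof -
    have "sin \<alpha>1 = sqrt (1 - C1\<^sup>2)" unfolding \<alpha>1_def C1_def[symmetric] Sa_def[symmetric] Sb_def[symmetric]
      using C1b by (simp add: sin_arccos)
    also have "1 - C1\<^sup>2 = D/(Sa*Sb)\<^sup>2" unfolding C1_def DA using Sa0 Sb0 by (simp add: field_simps power2_eq_square)
    finally show ?thesis unfolding R_def using Sa0 Sb0 by (simp add: real_sqrt_divide)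
  qed
  have sinA2: "sin \<alpha>2 = R/(Sa*Sd)"
  proof -
    have DB: "D = (Sa*Sd)\<^sup>2 - (a*d-b)\<^sup>2" unfolding D_def using Sa2 Sd2 by algebra
    have "sin \<alpha>2 = sqrt (1 - C2\<^sup>2)" unfolding \<alpha>2_def C2_def[symmetric] Sa_def[symmetric] Sd_def[symmetric]
      using C2b by (simp add: sin_arccos)
    also have "1 - C2\<^sup>2 = D/(Sa*Sd)\<^sup>2" unfolding C2_def DB using Sa0 Sd0 by (simp add: field_simps power2_eq_square)
    finally show ?thesis unfolding R_def using Sa0 Sd0 by (simp add: real_sqrt_divide)
  qed
  have sinT: "sin \<theta> = R/(Sb*Sd)"
  proof -
    have DB: "D = (Sb*Sd)\<^sup>2 - (b*d-a)\<^sup>2" unfolding D_def using Sb2 Sd2 by algebra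
    have "sin \<theta> = sqrt (1 - C3\<^sup>2)" unfolding \<theta>_def C3_def[symmetric] Sb_def[symmetric] Sd_def[symmetric]
      using C3b by (simp add: sin_arccos)
    also have "1 - C3\<^sup>2 = D/(Sb*Sd)\<^sup>2" unfolding C3_def DB using Sb0 Sd0 by (simp add: field_simps power2_eq_square)
    finally show ?thesis unfolding R_def using Sb0 Sd0 by (simp add: real_sqrt_divide)
  qed
  have cosA1: "cos \<alpha>1 = C1" unfolding \<alpha>1_def C1_def Sa_def Sb_def using C1b unfolding C1_def Sa_def Sb_def by simp
  have cosA2: "cos \<alpha>2 = C2" unfolding \<alpha>2_def C2_def Sa_def Sd_def using C2b unfolding C2_def Sa_def Sd_def by simp
  have cosT: "cos \<theta> = C3" unfolding \<theta>_def C3_def Sb_def Sd_def using C3b unfolding C3_def Sb_def Sd_def by simp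
  have cosB: "cos \<beta> = X" unfolding \<beta>_def X_def Sa_def Sc_def using Xb unfolding X_def Sa_def Sc_def by simp
  define p where "p = (\<alpha>1 + \<alpha>2 - \<theta>)/2"
  have cos2p: "cos (2*p) = ((a*b-d)*(a*d-b)*(b*d-a) + D*((a*b-d)+(a*d-b)-(b*d-a)))/((a\<^sup>2-1)*(b\<^sup>2-1)*(d\<^sup>2-1))"
  proof -
    have tp: "2*p = \<alpha>1 + \<alpha>2 - \<theta>" unfolding p_def by simp
    have "cos (2*p) = cos (\<alpha>1 + \<alpha>2 - \<theta>)" by (simp only: tp)
    also have "\<dots> = (C1*C2 - R/(Sa*Sb)*(R/(Sa*Sd)))*C3 + (R/(Sa*Sb)*C2 + C1*(R/(Sa*Sd)))*(R/(Sb*Sd))"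
      by (simp add: cos_diff cos_add sin_add cosA1 cosA2 cosT sinA1 sinA2 sinT)
    also have "\<dots> = ((a*b-d)*(a*d-b)*(b*d-a) + R\<^sup>2*((a*b-d)+(a*d-b)-(b*d-a)))/(Sa\<^sup>2*Sb\<^sup>2*Sd\<^sup>2)"
      unfolding C1_def C2_def C3_def using Sa0 Sb0 Sd0 by (simp add: field_simps power2_eq_square)
    finally show ?thesis unfolding R2 Sa2 Sb2 Sd2 .
  qed
  have L0: "((a\<^sup>2-1)*(b\<^sup>2-1)*(d\<^sup>2-1) + (a*b-d)*(a*d-b)*(b*d-a)
      + D*((a*b-d)+(a*d-b)-(b*d-a)))*(a+1)*(c\<^sup>2-1)
      - 2*c\<^sup>2*(a-1)*((a\<^sup>2-1)*(b\<^sup>2-1)*(d\<^sup>2-1)) = 0"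
    unfolding D_def poly_id DG0 by simp
  have X2: "X\<^sup>2 = c\<^sup>2*(a-1)/((a+1)*(c\<^sup>2-1))"
  proof -
    have nn: "(a*c-c)\<^sup>2 = c\<^sup>2*(a-1)\<^sup>2" by algebra
    have "X\<^sup>2 = (a*c-c)\<^sup>2/(Sa\<^sup>2*Sc\<^sup>2)" unfolding X_def by (simp add: power_divide power_mult_distrib)
    also have "\<dots> = c\<^sup>2*(a-1)\<^sup>2/((a\<^sup>2-1)*(c\<^sup>2-1))" unfolding Sa2 Sc2 nn ..
    also have "\<dots> = ((a-1)*(c\<^sup>2*(a-1)))/((a-1)*((a+1)*(c\<^sup>2-1)))"
      by (simp add: power2_eq_square mult_ac algebra_simps)
    also have "\<dots> = c\<^sup>2*(a-1)/((a+1)*(c\<^sup>2-1))" using a1 by (intro mult_divide_mult_cancel_left) simp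
    finally show ?thesis .
  qed
  have cp2: "(cos p)\<^sup>2 = X\<^sup>2"
  proof -
    have "cos (2*p) = 2*(cos p)\<^sup>2 - 1" by (simp add: cos_double_cos)
    then have "(cos p)\<^sup>2 = (1 + cos (2*p))/2" by simp
    also have "\<dots> = X\<^sup>2" unfolding cos2p X2
    proof (rule frac_aux)
      show "(a\<^sup>2-1)*(b\<^sup>2-1)*(d\<^sup>2-1) \<noteq> 0" using a2 b2 d2 by simp
      show "(a+1)*(c\<^sup>2-1) \<noteq> 0" using a1 c2 by simp
      show "((a\<^sup>2-1)*(b\<^sup>2-1)*(d\<^sup>2-1) + ((a*b-d)*(a*d-b)*(b*d-a) + D*((a*b-d)+(a*d-b)-(b*d-a))))*((a+1)*(c\<^sup>2-1))
        - 2*(c\<^sup>2*(a-1))*((a\<^sup>2-1)*(b\<^sup>2-1)*(d\<^sup>2-1)) = 0"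
        using L0 by (simp add: mult.assoc add.assoc)
    qed
    finally show ?thesis .
  qed
  have pge: "p \<ge> -pi/2"
  proof -
    have "\<alpha>1 \<ge> 0" "\<alpha>2 \<ge> 0" "\<theta> \<le> pi" unfolding \<alpha>1_def \<alpha>2_def \<theta>_def
      using C1b C2b C3b unfolding C1_def C2_def C3_def Sa_def Sb_def Sd_def by (auto intro: arccos_lbound arccos_ubound)
    then show ?thesis unfolding p_def by simp
  qed
  have ple: "p \<le> pi/2"
  proof -
    have "\<theta> \<ge> 0" unfolding \<theta>_def using C3b unfolding C3_def Sb_def Sd_def by (auto intro: arccos_lbound)
    moreover have "\<alpha>1 + \<alpha>2 \<le> pi"
    proof -
      have key: "C1 + C2 \<ge> 0"
      proof -
        have f: "(b*Sd + d*Sb)*(a - b*d + Sb*Sd) = (a*b - d)*Sd + (a*d - b)*Sb"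
        proof -
          have "d*Sd + b*Sb = (b*d - Sb*Sd)*(b*Sd + d*Sb)" using Sb2 Sd2 by algebra
          then show ?thesis by (simp add: algebra_simps)
        qed
        have DD: "D = (a - (b*d - Sb*Sd))*((b*d + Sb*Sd) - a)" unfolding D_def using Sb2 Sd2
          by algebra
        have g: "a - b*d + Sb*Sd \<ge> 0"
        proof (rule ccontr)
          assume "\<not> ?thesis"
          moreover have "Sb*Sd > 0" using Sb0 Sd0 by simp
          ultimately have "a - (b*d - Sb*Sd) < 0" "(b*d + Sb*Sd) - a > 0" by linarith+
          then have "D < 0" unfolding DD by (simp add: mult_neg_pos)
          then show False using D0 by simp
        qed
        have "b*Sd > 0" "d*Sb > 0" using b1 d1 Sb0 Sd0 by simp_all
        then have "b*Sd + d*Sb \<ge> 0" by simp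
        then have "(a*b - d)*Sd + (a*d - b)*Sb \<ge> 0" using g f by (metis mult_nonneg_nonneg)
        then have "((a*b - d)*Sd + (a*d - b)*Sb)/(Sa*Sb*Sd) \<ge> 0" using Sa0 Sb0 Sd0 by simp
        also have "((a*b - d)*Sd + (a*d - b)*Sb)/(Sa*Sb*Sd) = C1 + C2" unfolding C1_def C2_def
          using Sa0 Sb0 Sd0 by (simp add: field_simps)
        finally show ?thesis .
      qed
      have "\<alpha>1 \<le> arccos (- C2)" unfolding \<alpha>1_def C1_def[symmetric] Sa_def[symmetric] Sb_def[symmetric]
        using key C1b C2b by (intro arccos_le_arccos) auto
      also have "arccos (- C2) = pi - \<alpha>2" unfolding \<alpha>2_def C2_def Sa_def Sd_def using C2b unfolding C2_def Sa_def Sd_def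
        by (simp add: arccos_minus)
      finally show ?thesis by simp
    qed
    ultimately show ?thesis unfolding p_def by simp
  qed
  have cp0: "cos p \<ge> 0" using pge ple by (intro cos_ge_zero) auto
  have X0: "X \<ge> 0" unfolding X_def using a1 c1 Sa0 Sc0 by simp
  have cpX: "cos p = X" using cp2 cp0 X0 by (simp add: power2_eq_iff_nonneg)
  have absp: "\<bar>p\<bar> = \<beta>"
  proof -
    have "cos \<bar>p\<bar> = cos p" by (simp add: abs_real_def)
    then have "arccos (cos \<bar>p\<bar>) = arccos X" using cpX by simp
    moreover have "arccos (cos \<bar>p\<bar>) = \<bar>p\<bar>" using pge ple by (intro arccos_cos) auto
    ultimately show ?thesis unfolding \<beta>_def X_def Sa_def Sc_def by simp
  qed
  have lhs: "\<theta> + (pi - \<alpha>1 - \<alpha>2 - \<theta>)/2 = pi/2 - p" unfolding p_def by (simp add: field_simps)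
  have rhs: "\<omega>/2 + (pi - \<beta> - \<beta> - \<omega>)/2 = pi/2 - \<beta>" by (simp add: field_simps)
  show ?thesis unfolding lhs rhs
  proof
    show "sin (pi/2 - p) = sin (pi/2 - \<beta>)" using cpX cosB by (simp add: sin_cos_eq)
    show "pi/2 - p = pi/2 - \<beta> \<or> pi/2 - p = pi - (pi/2 - \<beta>)" using absp by (cases "p \<ge> 0") auto
  qed
qed


lemma gangle_formula:
  fixes A B C :: "'a::real_inner"
  assumes s: "s > 0" and A: "norm A < s" and B: "norm B < s" and C: "norm C < s"
  shows "gangle s A B C = arccos ((gg s A B * gg s A C - gg s B C)/(sqrt ((gg s A B)\<^sup>2 - 1) * sqrt ((gg s A C)\<^sup>2 - 1)))"
  unfolding gangle_def cos_formula[OF s A B C] ..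

lemma cs_bound:
  fixes u v :: "'a::real_inner"
  shows "\<bar>(u \<bullet> v)/(norm u * norm v)\<bar> \<le> 1"
proof (cases "norm u * norm v = 0")
  case True then show ?thesis unfolding True by simp
next
  case False
  then have p: "norm u * norm v > 0" by (simp add: less_le)
  have cs: "\<bar>u \<bullet> v\<bar> \<le> norm u * norm v" by (rule Cauchy_Schwarz_ineq2)
  have "\<bar>(u \<bullet> v)/(norm u * norm v)\<bar> = \<bar>u \<bullet> v\<bar>/(norm u * norm v)"
    using p by (simp add: abs_divide)
  also have "\<dots> \<le> (norm u * norm v)/(norm u * norm v)"
    by (rule divide_right_mono[OF cs less_imp_le[OF p]])
  also have "\<dots> = 1" using p by (intro divide_self) linarith
  finally show ?thesis .
qed

lemma formula_bound:
  fixes A B C :: "'a::real_inner"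
  assumes s: "s > 0" and A: "norm A < s" and B: "norm B < s" and C: "norm C < s"
  shows "\<bar>(gg s A B * gg s A C - gg s B C)/(sqrt ((gg s A B)\<^sup>2 - 1) * sqrt ((gg s A C)\<^sup>2 - 1))\<bar> \<le> 1"
  unfolding cos_formula[OF s A B C, symmetric] gdist_def by (rule cs_bound)

lemma gdist_zero:
  fixes A B :: "'a::real_inner"
  assumes s: "s > 0" and A: "norm A < s" and B: "norm B < s" and z: "gdist s A B = 0"
  shows "A = B"
proof -
  have p: "gg s A B > 0" by (rule gg_pos[OF s A B])
  have "1 - 1/(gg s A B)\<^sup>2 = 0" using norm_gvec[OF s A B] z unfolding gdist_def by simp
  then have "(gg s A B)\<^sup>2 = 1" using p by (simp add: field_simps)
  then have "gg s A B = 1" using p by (simp add: power2_eq_1_iff)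
  then show ?thesis by (rule gg_eq1[OF s A B])
qed

lemma gdist_self:
  fixes A :: "'a::real_inner"
  assumes s: "s > 0" and A: "norm A < s"
  shows "gdist s A A = 0"
  unfolding gdist_eq[OF s A A] gg_self[OF s A] by simp

lemma gdist_eq_gg:
  fixes Z A B :: "'a::real_inner"
  assumes s: "s > 0" and Z: "norm Z < s" and A: "norm A < s" and B: "norm B < s" and e: "gdist s Z A = gdist s Z B"
  shows "gg s Z A = gg s Z B"
proof -
  have pA: "gg s Z A > 0" by (rule gg_pos[OF s Z A])
  have pB: "gg s Z B > 0" by (rule gg_pos[OF s Z B])
  have "1 - 1/(gg s Z A)\<^sup>2 = 1 - 1/(gg s Z B)\<^sup>2"
    using norm_gvec[OF s Z A] norm_gvec[OF s Z B] e unfolding gdist_def by simp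
  then have "(gg s Z A)\<^sup>2 = (gg s Z B)\<^sup>2" using pA pB by (simp add: field_simps)
  then show ?thesis using pA pB by (simp add: power2_eq_iff_nonneg)
qed

lemma gg_gt1:
  fixes A B :: "'a::real_inner"
  assumes s: "s > 0" and A: "norm A < s" and B: "norm B < s" and ne: "A \<noteq> B"
  shows "gg s A B > 1"
  using gg_ge1[OF s A B] gg_eq1[OF s A B] ne by fastforce

theorem mainTheorem2:
  fixes s :: real and Oc A1 A2 A3 :: "real ^ 'n"
  assumes "s > 0" and "CARD('n) \<ge> 2"
    and "Oc \<in> sball s" and "A1 \<in> sball s" and "A2 \<in> sball s" and "A3 \<in> sball s"
    and "A1 \<noteq> A2" and "A1 \<noteq> A3" and "A2 \<noteq> A3"
    and "on_gyrocircle s Oc {A1, A2, A3}"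
  defines "\<theta> \<equiv> gangle s A3 A1 A2"
    and "\<phi> \<equiv> gangle s Oc A1 A2 / 2"
  shows "sin (\<theta> + gdefect s A1 A2 A3 / 2) = sin (\<phi> + gdefect s A1 A2 Oc / 2)
    \<and> (\<theta> + gdefect s A1 A2 A3 / 2 = \<phi> + gdefect s A1 A2 Oc / 2
       \<or> \<theta> + gdefect s A1 A2 A3 / 2 = pi - (\<phi> + gdefect s A1 A2 Oc / 2))"
proof -
  have s: "s > 0" using assms(1) .
  have nO: "norm Oc < s" and n1: "norm A1 < s" and n2: "norm A2 < s" and n3: "norm A3 < s"
    using assms(3-6) unfolding sball_def by auto
  obtain P1 P2 P3 r where P1: "P1 \<in> sball s" and pO: "Oc \<in> gyroplane s P1 P2 P3"
    and sub: "{A1, A2, A3} \<subseteq> {X \<in> gyroplane s P1 P2 P3. gdist s Oc X = r}"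
    using assms(10) unfolding on_gyrocircle_def by blast
  have nP: "norm P1 < s" using P1 unfolding sball_def by simp
  have p1: "A1 \<in> gyroplane s P1 P2 P3" "gdist s Oc A1 = r" using sub by auto
  have p2: "A2 \<in> gyroplane s P1 P2 P3" "gdist s Oc A2 = r" using sub by auto
  have p3: "A3 \<in> gyroplane s P1 P2 P3" "gdist s Oc A3 = r" using sub by auto
  have O1: "Oc \<noteq> A1"
  proof
    assume e: "Oc = A1"
    then have "r = 0" using p1 gdist_self[OF s n1] by simp
    then have "Oc = A2" using gdist_zero[OF s nO n2] p2 by simp
    then show False using e assms(7) by simp
  qed
  have O2: "Oc \<noteq> A2"
  proof
    assume e: "Oc = A2"
    then have "r = 0" using p2 gdist_self[OF s n2] by simp
    then have "Oc = A1" using gdist_zero[OF s nO n1] p1 by simp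
    then show False using e assms(7) by simp
  qed
  have O3: "Oc \<noteq> A3"
  proof
    assume e: "Oc = A3"
    then have "r = 0" using p3 gdist_self[OF s n3] by simp
    then have "Oc = A1" using gdist_zero[OF s nO n1] p1 by simp
    then show False using e assms(8) by simp
  qed
  define a where "a = gg s A1 A2"
  define b where "b = gg s A1 A3"
  define d where "d = gg s A2 A3"
  define c where "c = gg s Oc A1"
  have cO2: "gg s Oc A2 = c" unfolding c_def using gdist_eq_gg[OF s nO n2 n1] p1 p2 by simp
  have cO3: "gg s Oc A3 = c" unfolding c_def using gdist_eq_gg[OF s nO n3 n1] p1 p3 by simp
  have a1: "a > 1" unfolding a_def using gg_gt1[OF s n1 n2 assms(7)] .
  have b1: "b > 1" unfolding b_def using gg_gt1[OF s n1 n3 assms(8)] .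
  have d1: "d > 1" unfolding d_def using gg_gt1[OF s n2 n3 assms(9)] .
  have c1: "c > 1" unfolding c_def using gg_gt1[OF s nO n1 O1] .
  have sy: "gg s A2 A1 = a" "gg s A3 A1 = b" "gg s A3 A2 = d" "gg s A1 Oc = c" "gg s A2 Oc = c" "gg s A3 Oc = c"
  proof -
    show "gg s A2 A1 = a" unfolding a_def by (rule gg_sym)
    show "gg s A3 A1 = b" unfolding b_def by (rule gg_sym)
    show "gg s A3 A2 = d" unfolding d_def by (rule gg_sym)
    show "gg s A1 Oc = c" unfolding c_def by (rule gg_sym)
    show "gg s A2 Oc = c" using gg_sym[of s A2 Oc] cO2 by simp
    show "gg s A3 Oc = c" using gg_sym[of s A3 Oc] cO3 by simp
  qed
  have self: "gg s Oc Oc = 1" "gg s A1 A1 = 1" "gg s A2 A2 = 1" "gg s A3 A3 = 1"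
    using gg_self[OF s] nO n1 n2 n3 by auto
  define X where "X = (\<lambda>i::nat. if i = 0 then Oc else if i = 1 then A1 else if i = 2 then A2 else A3)"
  have X4: "{..<4::nat} = {0,1,2,3}" by auto
  have inj: "inj_on X {..<4}"
    unfolding X4 X_def using O1 O2 O3 assms(7-9) by (auto simp: inj_on_def)
  have inpl: "\<forall>i<4. X i \<in> gyroplane s P1 P2 P3" unfolding X_def using pO p1 p2 p3 by auto
  have nX: "\<forall>i<4. norm (X i) < s" unfolding X_def using nO n1 n2 n3 by auto
  obtain l where l: "\<exists>i<4. l i \<noteq> 0" "\<forall>Y. (\<Sum>i<4. l i * gg s (X i) Y) = 0"
    using coplanar_rel[OF s nP inpl nX inj] by blast
  have sumexp: "\<And>Y. (\<Sum>i<4. l i * gg s (X i) Y) = l 0 * gg s Oc Y + l 1 * gg s A1 Y + l 2 * gg s A2 Y + l 3 * gg s A3 Y"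
    unfolding X4 X_def by simp
  have e0: "l 0 + l 1*c + l 2*c + l 3*c = 0" using l(2)[rule_format, of Oc] unfolding sumexp sy self by simp
  have e1: "l 0*c + l 1 + l 2*a + l 3*b = 0" using l(2)[rule_format, of A1] unfolding sumexp sy self c_def[symmetric] by simp
  have e2: "l 0*c + l 1*a + l 2 + l 3*d = 0" using l(2)[rule_format, of A2] unfolding sumexp sy self cO2 a_def[symmetric] d_def[symmetric] by simp
  have e3: "l 0*c + l 1*b + l 2*d + l 3 = 0" using l(2)[rule_format, of A3] unfolding sumexp sy self cO3 b_def[symmetric] d_def[symmetric] by simp
  have nz: "l 0 \<noteq> 0 \<or> l 1 \<noteq> 0 \<or> l 2 \<noteq> 0 \<or> l 3 \<noteq> 0"
  proof -
    obtain i where i: "i < 4" "l i \<noteq> 0" using l(1) by blast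
    then have "i = 0 \<or> i = 1 \<or> i = 2 \<or> i = 3" by arith
    then show ?thesis using i by auto
  qed
  have DG0: "DG c a b d = 0" by (rule det_zero[OF e0 e1 e2 e3 nz])
  have gT: "gangle s A3 A1 A2 = arccos ((b*d - a)/(sqrt (b\<^sup>2-1) * sqrt (d\<^sup>2-1)))"
    unfolding gangle_formula[OF s n3 n1 n2] sy a_def[symmetric] ..
  have g1: "gangle s A1 A2 A3 = arccos ((a*b - d)/(sqrt (a\<^sup>2-1) * sqrt (b\<^sup>2-1)))"
    unfolding gangle_formula[OF s n1 n2 n3] a_def[symmetric] b_def[symmetric] d_def[symmetric] ..
  have g2: "gangle s A2 A1 A3 = arccos ((a*d - b)/(sqrt (a\<^sup>2-1) * sqrt (d\<^sup>2-1)))"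
    unfolding gangle_formula[OF s n2 n1 n3] sy b_def[symmetric] d_def[symmetric] ..
  have g4: "gangle s A1 A2 Oc = arccos ((a*c - c)/(sqrt (a\<^sup>2-1) * sqrt (c\<^sup>2-1)))"
    unfolding gangle_formula[OF s n1 n2 nO] sy a_def[symmetric] ..
  have g5: "gangle s A2 A1 Oc = arccos ((a*c - c)/(sqrt (a\<^sup>2-1) * sqrt (c\<^sup>2-1)))"
    unfolding gangle_formula[OF s n2 n1 nO] sy ..
  have B1: "\<bar>(a*b - d)/(sqrt (a\<^sup>2-1) * sqrt (b\<^sup>2-1))\<bar> \<le> 1"
    using formula_bound[OF s n1 n2 n3] unfolding a_def b_def d_def .
  have B2: "\<bar>(a*d - b)/(sqrt (a\<^sup>2-1) * sqrt (d\<^sup>2-1))\<bar> \<le> 1"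
    using formula_bound[OF s n2 n1 n3] unfolding sy unfolding a_def b_def d_def .
  have B3: "\<bar>(b*d - a)/(sqrt (b\<^sup>2-1) * sqrt (d\<^sup>2-1))\<bar> \<le> 1"
    using formula_bound[OF s n3 n1 n2] unfolding sy unfolding a_def b_def d_def .
  have B4: "\<bar>(a*c - c)/(sqrt (a\<^sup>2-1) * sqrt (c\<^sup>2-1))\<bar> \<le> 1"
    using formula_bound[OF s n1 n2 nO] unfolding sy unfolding a_def c_def .
  note FT = final_trig[OF a1 b1 c1 d1 DG0 B1 B2 B3 B4, of "gangle s Oc A1 A2"]
  have G: "gdefect s A1 A2 A3 = pi - arccos ((a*b - d)/(sqrt (a\<^sup>2-1) * sqrt (b\<^sup>2-1)))
     - arccos ((a*d - b)/(sqrt (a\<^sup>2-1) * sqrt (d\<^sup>2-1))) - arccos ((b*d - a)/(sqrt (b\<^sup>2-1) * sqrt (d\<^sup>2-1)))"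
    unfolding gdefect_def gT g1 g2 ..
  have H: "gdefect s A1 A2 Oc = pi - arccos ((a*c - c)/(sqrt (a\<^sup>2-1) * sqrt (c\<^sup>2-1)))
     - arccos ((a*c - c)/(sqrt (a\<^sup>2-1) * sqrt (c\<^sup>2-1))) - gangle s Oc A1 A2"
    unfolding gdefect_def g4 g5 ..
  show ?thesis
    unfolding \<theta>_def \<phi>_def G H gT
    by (rule FT)
qed

end
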